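(* Let $n\ge2$, $s\in\mathbb{R}$ with $s\ne1$, and $k\ge1$. If $\phi\in C^1(\mathbb{R}^n)$ satisfies $\operatorname{supp}\phi\subset B(k)$, then $$\sup_{0<r\le k}\ r^{(n-2)/2}(1+k+r)^{1/2}(1+k-r)^{(s-1)/2}\|\phi(r\,\cdot)\|_{L^2(S^{n-1})}\le C\Big(\|(1+k-r)^{s/2}\partial_r\phi\|_{L^2(\mathbb{R}^n)}+\big\|(1+k-r)^{s/2}\tfrac{\phi}{r}\big\|_{L^2(\mathbb{R}^n)}\Big),$$ where $C$ depends only on $n$ and $s$ (independent of $k$).
   Context: $r=|x|$, $\partial_r$ is the radial derivative, $\phi(r\,\cdot)$ denotes the function $\omega\mapsto\phi(r\omega)$ on the unit sphere $S^{n-1}$, and $B(k)=\{x\in\mathbb{R}^n:|x|\le k\}$. *)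

theory Defs
  imports "HOL-Analysis.Analysis"
begin

definition C1_fun :: "('a::euclidean_space \<Rightarrow> real) \<Rightarrow> bool" where
  "C1_fun \<phi> \<longleftrightarrow> (\<exists>D :: 'a \<Rightarrow> ('a \<Rightarrow>\<^sub>L real).
      (\<forall>x. (\<phi> has_derivative blinfun_apply (D x)) (at x)) \<and> continuous_on UNIV D)"

definition supp :: "('a::real_normed_vector \<Rightarrow> real) \<Rightarrow> 'a set" where
  "supp \<phi> = closure {x. \<phi> x \<noteq> 0}"

definition radial_deriv :: "('a::euclidean_space \<Rightarrow> real) \<Rightarrow> 'a \<Rightarrow> real" where
  "radial_deriv \<phi> x = frechet_derivative \<phi> (at x) (x /\<^sub>R norm x)"

text \<open>Surface measure on the unit sphere S^{n-1}, via the cone construction: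
  sigma(A) = n * Lebesgue measure of {t w | 0 < t \<le> 1, w \<in> A}
  (push-forward of n * Lebesgue on the punctured unit ball under x \<mapsto> x/|x|).\<close>
definition sphere_measure :: "('a::euclidean_space) measure" where
  "sphere_measure =
     distr (density (restrict_space lborel (ball 0 1 - {0})) (\<lambda>_. ennreal (real DIM('a))))
           (restrict_space borel (sphere 0 1)) (\<lambda>x. x /\<^sub>R norm x)"

definition L2_norm :: "'a measure \<Rightarrow> ('a \<Rightarrow> real) \<Rightarrow> ennreal" where
  "L2_norm M g =
     (let I = (\<integral>\<^sup>+ x. ennreal ((g x)\<^sup>2) \<partial>M)
      in if I = \<infinity> then \<infinity> else ennreal (sqrt (enn2real I)))"

end

theory Submission
  imports Defs
begin


lemma nn_integral_scale:
  fixes f :: "'a::euclidean_space \<Rightarrow> ennreal"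
  assumes [measurable]: "f \<in> borel_measurable borel" and c: "c \<noteq> 0"
  shows "(\<integral>\<^sup>+x. f x \<partial>lborel) = ennreal (\<bar>c\<bar>^DIM('a)) * (\<integral>\<^sup>+x. f (c *\<^sub>R x) \<partial>lborel)"
  by (subst lborel_affine[OF c, of 0])
     (simp add: nn_integral_density nn_integral_distr nn_integral_cmult)

lemma pred_ball_meas[measurable]:
  fixes f :: "'b \<Rightarrow> 'a::euclidean_space"
  assumes [measurable]: "f \<in> M \<rightarrow>\<^sub>M borel" "g \<in> borel_measurable M"
  shows "Measurable.pred M (\<lambda>x. f x \<in> ball 0 (g x))"
  unfolding mem_ball by measurable

lemma pred_zero_meas[measurable]:
  fixes f :: "'b \<Rightarrow> 'a::euclidean_space"
  assumes [measurable]: "f \<in> M \<rightarrow>\<^sub>M borel"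
  shows "Measurable.pred M (\<lambda>x. f x \<in> {0})"
  unfolding singleton_iff by measurable

lemma pair_lborel_meas:
  fixes f :: "'a::euclidean_space \<times> 'b::euclidean_space \<Rightarrow> 'c::topological_space"
  shows "f \<in> borel_measurable (borel \<Otimes>\<^sub>M borel) \<Longrightarrow> f \<in> borel_measurable (lborel \<Otimes>\<^sub>M lborel)"
  by (subst measurable_cong_sets[OF sets_pair_measure_cong[OF sets_lborel sets_lborel] refl])

lemma tail_int:
  fixes d :: nat assumes "d \<ge> 1"
  shows "(\<integral>\<^sup>+t. indicator {1<..} t * ennreal (1 / t ^ (d+1)) \<partial>lborel) = ennreal (1 / real d)"
proof -
  have "(\<integral>\<^sup>+t. indicator {1<..} t * ennreal (1 / t ^ (d+1)) \<partial>lborel)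
      = (\<integral>\<^sup>+t. ennreal (1 / t ^ (d+1)) * indicator {1..} t \<partial>lborel)"
    by (intro nn_integral_cong_AE) (auto simp: mult.commute indicator_def intro!: AE_I[where N="{1}"])
  also have "\<dots> = ennreal (0 - (- 1 / (real d * 1 ^ d)))"
  proof (rule nn_integral_FTC_atLeast[where F="\<lambda>x. -1/(real d * x^d)" and T=0])
    show "(\<lambda>x::real. 1 / x ^ (d + 1)) \<in> borel_measurable borel" by measurable
    fix x :: real assume x: "1 \<le> x"
    show "0 \<le> 1 / x ^ (d+1)" using x by simp
    show "((\<lambda>x. - 1 / (real d * x ^ d)) has_real_derivative 1 / x ^ (d + 1)) (at x)"
      using x assms
      apply -
      apply (rule derivative_eq_intros refl | simp)+
      by (cases d) (simp_all add: field_simps)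
  next
    show "((\<lambda>x::real. - 1 / (real d * x ^ d)) \<longlongrightarrow> 0) at_top"
    proof -
      have "filterlim (\<lambda>x::real. real d * x ^ d) at_top at_top"
        using assms by (intro filterlim_tendsto_pos_mult_at_top[OF tendsto_const])
           (auto intro!: filterlim_pow_at_top filterlim_ident)
      hence "((\<lambda>x::real. 1 / (real d * x ^ d)) \<longlongrightarrow> 0) at_top"
        by (intro tendsto_divide_0[OF tendsto_const]) (rule filterlim_at_top_imp_at_infinity)
      from tendsto_minus[OF this] show ?thesis by simp
    qed
  qed
  finally show ?thesis by simp
qed

lemma polar:
  fixes F :: "'a::euclidean_space \<Rightarrow> ennreal"
  assumes F[measurable]: "F \<in> borel_measurable borel"
  shows "ennreal (real DIM('a)) * (\<integral>\<^sup>+x. indicator (ball 0 1 - {0}) x *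
      (\<integral>\<^sup>+\<rho>. indicator {0<..} \<rho> * ennreal (\<rho> ^ (DIM('a) - 1)) * F (\<rho> *\<^sub>R (x /\<^sub>R norm x)) \<partial>lborel) \<partial>lborel)
    = (\<integral>\<^sup>+y. indicator (-{0}) y * F y \<partial>lborel)"
proof -
  define d where "d = DIM('a)"
  have d1: "d \<ge> 1" using DIM_positive[where 'a='a] by (simp add: d_def)
  define I where "I = (\<integral>\<^sup>+y. indicator (-{0}) y * F y \<partial>lborel)"
  have "(\<integral>\<^sup>+x. indicator (ball 0 1 - {0}) x *
      (\<integral>\<^sup>+\<rho>. indicator {0<..} \<rho> * ennreal (\<rho> ^ (d - 1)) * F (\<rho> *\<^sub>R (x /\<^sub>R norm x)) \<partial>lborel) \<partial>lborel)
    = (\<integral>\<^sup>+x. (\<integral>\<^sup>+\<rho>. indicator (ball 0 1 - {0}) x *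
         (indicator {0<..} \<rho> * ennreal (\<rho> ^ (d - 1)) * F (\<rho> *\<^sub>R (x /\<^sub>R norm x))) \<partial>lborel) \<partial>lborel)"
    by (intro nn_integral_cong nn_integral_cmult[symmetric]) measurable
  also have "\<dots> = (\<integral>\<^sup>+\<rho>. (\<integral>\<^sup>+x. indicator (ball 0 1 - {0}) x *
         (indicator {0<..} \<rho> * ennreal (\<rho> ^ (d - 1)) * F (\<rho> *\<^sub>R (x /\<^sub>R norm x))) \<partial>lborel) \<partial>lborel)"
    by (rule lborel_pair.Fubini'[symmetric]) (rule pair_lborel_meas, measurable)
  also have "\<dots> = (\<integral>\<^sup>+\<rho>. (\<integral>\<^sup>+y. indicator {0<..} \<rho> * ennreal (1 / \<rho>) *
         (indicator (ball 0 \<rho> - {0}) y * F (\<rho> *\<^sub>R (y /\<^sub>R norm y))) \<partial>lborel) \<partial>lborel)"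
  proof (rule nn_integral_cong)
    fix \<rho> :: real
    show "(\<integral>\<^sup>+x. indicator (ball 0 1 - {0}) x *
         (indicator {0<..} \<rho> * ennreal (\<rho> ^ (d - 1)) * F (\<rho> *\<^sub>R (x /\<^sub>R norm x))) \<partial>lborel)
      = (\<integral>\<^sup>+y. indicator {0<..} \<rho> * ennreal (1 / \<rho>) *
         (indicator (ball 0 \<rho> - {0}) y * F (\<rho> *\<^sub>R (y /\<^sub>R norm y))) \<partial>lborel)"
    proof (cases "\<rho> > 0")
      case False thus ?thesis by simp
    next
      case True
      have "(\<integral>\<^sup>+x. indicator (ball 0 1 - {0}) x *
         (indicator {0<..} \<rho> * ennreal (\<rho> ^ (d - 1)) * F (\<rho> *\<^sub>R (x /\<^sub>R norm x))) \<partial>lborel)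
        = ennreal (\<rho> ^ (d - 1)) * (\<integral>\<^sup>+x. indicator (ball 0 1 - {0}) x * F (\<rho> *\<^sub>R (x /\<^sub>R norm x)) \<partial>lborel)"
        using True by (subst nn_integral_cmult[symmetric]) (auto intro!: nn_integral_cong simp: mult_ac)
      also have "(\<integral>\<^sup>+x. indicator (ball 0 1 - {0}) x * F (\<rho> *\<^sub>R (x /\<^sub>R norm x)) \<partial>lborel)
         = ennreal (\<bar>1/\<rho>\<bar>^d) * (\<integral>\<^sup>+y. indicator (ball 0 1 - {0}) ((1/\<rho>) *\<^sub>R y) * F (\<rho> *\<^sub>R (((1/\<rho>) *\<^sub>R y) /\<^sub>R norm ((1/\<rho>) *\<^sub>R y))) \<partial>lborel)"
        unfolding d_def using True by (intro nn_integral_scale) auto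
      also have "(\<integral>\<^sup>+y. indicator (ball 0 1 - {0}) ((1/\<rho>) *\<^sub>R y) * F (\<rho> *\<^sub>R (((1/\<rho>) *\<^sub>R y) /\<^sub>R norm ((1/\<rho>) *\<^sub>R y))) \<partial>lborel)
         = (\<integral>\<^sup>+y. indicator (ball 0 \<rho> - {0}) y * F (\<rho> *\<^sub>R (y /\<^sub>R norm y)) \<partial>lborel)"
      proof (rule nn_integral_cong)
        fix y :: 'a
        have A: "((1/\<rho>) *\<^sub>R y \<in> ball 0 1 - {0}) = (y \<in> ball 0 \<rho> - {0})"
          using True by (auto simp: field_simps)
        have B: "((1/\<rho>) *\<^sub>R y) /\<^sub>R norm ((1/\<rho>) *\<^sub>R y) = y /\<^sub>R norm y"
          using True by (simp add: field_simps)
        show "indicator (ball 0 1 - {0}) ((1/\<rho>) *\<^sub>R y) * F (\<rho> *\<^sub>R (((1/\<rho>) *\<^sub>R y) /\<^sub>R norm ((1/\<rho>) *\<^sub>R y)))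
           = indicator (ball 0 \<rho> - {0}) y * F (\<rho> *\<^sub>R (y /\<^sub>R norm y))"
          unfolding B indicator_def A by simp
      qed
      finally have "(\<integral>\<^sup>+x. indicator (ball 0 1 - {0}) x *
         (indicator {0<..} \<rho> * ennreal (\<rho> ^ (d - 1)) * F (\<rho> *\<^sub>R (x /\<^sub>R norm x))) \<partial>lborel)
        = ennreal (\<rho> ^ (d - 1)) * ennreal (\<bar>1/\<rho>\<bar>^d) * (\<integral>\<^sup>+y. indicator (ball 0 \<rho> - {0}) y * F (\<rho> *\<^sub>R (y /\<^sub>R norm y)) \<partial>lborel)"
        by (simp add: mult.assoc)
      also have "ennreal (\<rho> ^ (d - 1)) * ennreal (\<bar>1/\<rho>\<bar>^d) = ennreal (1/\<rho>)"
      proof -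
        have "\<rho> ^ (d - 1) * \<bar>1/\<rho>\<bar>^d = 1/\<rho>"
          using True d1 by (cases d) (simp_all add: field_simps)
        thus ?thesis using True by (simp add: ennreal_mult[symmetric])
      qed
      finally show ?thesis using True
        by (subst nn_integral_cmult) (auto simp: mult_ac)
    qed
  qed
  also have "\<dots> = (\<integral>\<^sup>+y. (\<integral>\<^sup>+\<rho>. indicator {0<..} \<rho> * ennreal (1 / \<rho>) *
         (indicator (ball 0 \<rho> - {0}) y * F (\<rho> *\<^sub>R (y /\<^sub>R norm y))) \<partial>lborel) \<partial>lborel)"
    by (rule lborel_pair.Fubini') (rule pair_lborel_meas, measurable)
  also have "\<dots> = (\<integral>\<^sup>+y. indicator (-{0}) y * (\<integral>\<^sup>+t. indicator {1<..} t * ennreal (1 / t) * F (t *\<^sub>R y) \<partial>lborel) \<partial>lborel)"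
  proof (rule nn_integral_cong)
    fix y :: 'a
    show "(\<integral>\<^sup>+\<rho>. indicator {0<..} \<rho> * ennreal (1 / \<rho>) *
         (indicator (ball 0 \<rho> - {0}) y * F (\<rho> *\<^sub>R (y /\<^sub>R norm y))) \<partial>lborel)
       = indicator (-{0}) y * (\<integral>\<^sup>+t. indicator {1<..} t * ennreal (1 / t) * F (t *\<^sub>R y) \<partial>lborel)"
    proof (cases "y = 0")
      case True thus ?thesis by simp
    next
      case False
      hence ny: "norm y > 0" by simp
      have "(\<integral>\<^sup>+\<rho>. indicator {0<..} \<rho> * ennreal (1 / \<rho>) *
         (indicator (ball 0 \<rho> - {0}) y * F (\<rho> *\<^sub>R (y /\<^sub>R norm y))) \<partial>lborel)
        = ennreal \<bar>norm y\<bar> * (\<integral>\<^sup>+t. indicator {0<..} (0 + norm y * t) * ennreal (1 / (0 + norm y * t)) *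
         (indicator (ball 0 (0 + norm y * t) - {0}) y * F ((0 + norm y * t) *\<^sub>R (y /\<^sub>R norm y))) \<partial>lborel)"
        using ny by (intro nn_integral_real_affine) measurable
      also have "\<dots> = (\<integral>\<^sup>+t. ennreal (norm y) * (indicator {0<..} (norm y * t) * ennreal (1 / (norm y * t)) *
         (indicator (ball 0 (norm y * t) - {0}) y * F ((norm y * t) *\<^sub>R (y /\<^sub>R norm y)))) \<partial>lborel)"
        by (subst nn_integral_cmult[symmetric]) auto
      also have "\<dots> = (\<integral>\<^sup>+t. indicator {1<..} t * ennreal (1 / t) * F (t *\<^sub>R y) \<partial>lborel)"
      proof (rule nn_integral_cong)
        fix t :: real
        show "ennreal (norm y) * (indicator {0<..} (norm y * t) * ennreal (1 / (norm y * t)) *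
         (indicator (ball 0 (norm y * t) - {0}) y * F ((norm y * t) *\<^sub>R (y /\<^sub>R norm y))))
          = indicator {1<..} t * ennreal (1 / t) * F (t *\<^sub>R y)"
        proof (cases "t > 1")
          case True
          have E1: "ennreal (norm y) * ennreal (1 / (norm y * t)) = ennreal (1/t)"
            using ny True by (simp add: ennreal_mult[symmetric])
          have E2: "(norm y * t) *\<^sub>R (y /\<^sub>R norm y) = t *\<^sub>R y" using ny by simp
          have E3: "y \<in> ball 0 (norm y * t) - {0}" using ny True False by simp
          have E4: "norm y * t \<in> {0<..}" using ny True by simp
          show ?thesis unfolding E2 using True E3 E4
            by (simp add: indicator_def mult.assoc[symmetric] E1)
        next
          case f: False
          have "\<not> (y \<in> ball 0 (norm y * t) - {0} \<and> norm y * t > 0)"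
            using ny f by (auto simp: mult_le_cancel_left1)
          thus ?thesis using f by (auto simp: indicator_def)
        qed
      qed
      finally show ?thesis using False by simp
    qed
  qed
  also have "\<dots> = (\<integral>\<^sup>+y. (\<integral>\<^sup>+t. indicator (-{0}) y * (indicator {1<..} t * ennreal (1 / t) * F (t *\<^sub>R y)) \<partial>lborel) \<partial>lborel)"
    by (intro nn_integral_cong nn_integral_cmult[symmetric]) measurable
  also have "\<dots> = (\<integral>\<^sup>+t. (\<integral>\<^sup>+y. indicator (-{0}) y * (indicator {1<..} t * ennreal (1 / t) * F (t *\<^sub>R y)) \<partial>lborel) \<partial>lborel)"
    by (rule lborel_pair.Fubini'[symmetric]) (rule pair_lborel_meas, measurable)
  also have "\<dots> = (\<integral>\<^sup>+t. indicator {1<..} t * ennreal (1 / t ^ (d+1)) * I \<partial>lborel)"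
  proof (rule nn_integral_cong)
    fix t :: real
    show "(\<integral>\<^sup>+y. indicator (-{0}) y * (indicator {1<..} t * ennreal (1 / t) * F (t *\<^sub>R y)) \<partial>lborel)
        = indicator {1<..} t * ennreal (1 / t ^ (d+1)) * I"
    proof (cases "t > 1")
      case False thus ?thesis by simp
    next
      case True
      have "I = ennreal (\<bar>t\<bar>^d) * (\<integral>\<^sup>+y. indicator (-{0}) (t *\<^sub>R y) * F (t *\<^sub>R y) \<partial>lborel)"
        unfolding I_def d_def using True by (intro nn_integral_scale) auto
      also have "(\<integral>\<^sup>+y. indicator (-{0}) (t *\<^sub>R y) * F (t *\<^sub>R y) \<partial>lborel) = (\<integral>\<^sup>+y. indicator (-{0}) y * F (t *\<^sub>R y) \<partial>lborel)"
        by (rule nn_integral_cong) (use True in \<open>simp add: indicator_def\<close>)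
      finally have II: "I = ennreal (t^d) * (\<integral>\<^sup>+y. indicator (-{0}) y * F (t *\<^sub>R y) \<partial>lborel)"
        using True by simp
      have "(\<integral>\<^sup>+y. indicator (-{0}) y * (indicator {1<..} t * ennreal (1 / t) * F (t *\<^sub>R y)) \<partial>lborel)
          = ennreal (1/t) * (\<integral>\<^sup>+y. indicator (-{0}) y * F (t *\<^sub>R y) \<partial>lborel)"
        using True by (subst nn_integral_cmult[symmetric]) (auto intro!: nn_integral_cong simp: mult_ac)
      also have "\<dots> = ennreal (1/t) * ennreal (1/t^d) * I"
      proof -
        have "ennreal (1/t^d) * ennreal (t^d) = 1"
          using True by (simp add: ennreal_mult[symmetric])
        have "ennreal (1/t) * ennreal (1/t^d) * I = ennreal (1/t) * (ennreal (1/t^d) * ennreal (t^d)) * (\<integral>\<^sup>+y. indicator (-{0}) y * F (t *\<^sub>R y) \<partial>lborel)"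
          unfolding II by (simp add: mult_ac)
        thus ?thesis using \<open>ennreal (1/t^d) * ennreal (t^d) = 1\<close> by simp
      qed
      also have "ennreal (1/t) * ennreal (1/t^d) = ennreal (1/t^(d+1))"
        using True by (simp add: ennreal_mult[symmetric] power_add field_simps)
      finally show ?thesis using True by simp
    qed
  qed
  also have "\<dots> = (\<integral>\<^sup>+t. indicator {1<..} t * ennreal (1 / t ^ (d+1)) \<partial>lborel) * I"
    by (rule nn_integral_multc) measurable
  also have "\<dots> = ennreal (1 / real d) * I"
    using tail_int[OF d1] by simp
  finally show ?thesis
    unfolding d_def[symmetric] I_def[symmetric] using d1
    by (simp add: mult.assoc[symmetric] ennreal_mult[symmetric])
qed


lemma ftc_bound:
  fixes f f' g :: "real \<Rightarrow> real"
  assumes ab: "a \<le> b"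
    and der: "\<And>x. x \<in> {a..b} \<Longrightarrow> (f has_real_derivative f' x) (at x)"
    and le: "\<And>x. x \<in> {a..b} \<Longrightarrow> f' x \<le> g x"
    and gi: "g integrable_on {a..b}"
  shows "f b - f a \<le> integral {a..b} g"
proof -
  have "(f' has_integral (f b - f a)) {a..b}"
    using ab der
    by (intro fundamental_theorem_of_calculus)
       (auto simp: has_real_derivative_iff_has_vector_derivative[symmetric] intro: has_field_derivative_at_within)
  thus ?thesis using le gi by (intro has_integral_le[OF _ integrable_integral]) auto
qed

lemma min_avg:
  fixes f :: "real \<Rightarrow> real"
  assumes ab: "a \<le> b" and c: "continuous_on {a..b} f"
  shows "\<exists>x0\<in>{a..b}. (\<forall>y\<in>{a..b}. f x0 \<le> f y) \<and> (b - a) * f x0 \<le> integral {a..b} f"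
proof -
  obtain x0 where x0: "x0 \<in> {a..b}" "\<forall>y\<in>{a..b}. f x0 \<le> f y"
    using continuous_attains_inf[OF compact_Icc _ c] ab by auto
  have "integral {a..b} (\<lambda>_. f x0) \<le> integral {a..b} f"
    using x0 c by (intro integral_le integrable_continuous_interval) auto
  thus ?thesis using x0 ab by (intro bexI[of _ x0]) auto
qed

lemma powr_cmp:
  fixes x y c e :: real
  assumes "0 < x" "0 < y" "x \<le> c * y" "y \<le> c * x" "1 \<le> c"
  shows "x powr e \<le> c powr \<bar>e\<bar> * y powr e"
proof (cases "e \<ge> 0")
  case True
  have "x powr e \<le> (c * y) powr e" using assms True by (intro powr_mono2) auto
  also have "\<dots> = c powr \<bar>e\<bar> * y powr e" using assms True by (simp add: powr_mult)
  finally show ?thesis .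
next
  case False
  have "y / c \<le> x" using assms by (simp add: field_simps)
  hence "x powr e \<le> (y / c) powr e" using assms False by (intro powr_mono2') auto
  also have "\<dots> = c powr \<bar>e\<bar> * y powr e"
    using assms False by (simp add: powr_divide powr_minus field_simps)
  finally show ?thesis .
qed


lemma two_mult_le: "2 * x * y \<le> x^2 + (y::real)^2"
proof -
  have "0 \<le> (x - y)^2" by simp
  thus ?thesis by (simp add: power2_eq_square algebra_simps)
qed

lemma amgm_rho:
  fixes \<rho> a b :: real assumes "0 < \<rho>"
  shows "\<bar>2 * a * b\<bar> \<le> \<rho> * (b^2 + a^2/\<rho>^2)"
proof -
  have "2 * (\<bar>a\<bar>) * (\<rho> * \<bar>b\<bar>) \<le> \<bar>a\<bar>^2 + (\<rho> * \<bar>b\<bar>)^2" by (rule two_mult_le)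
  hence "\<rho> * \<bar>2 * a * b\<bar> \<le> a^2 + \<rho>^2 * b^2"
    by (simp add: abs_mult power_mult_distrib algebra_simps)
  hence "\<bar>2 * a * b\<bar> \<le> (a^2 + \<rho>^2 * b^2) / \<rho>" using assms by (simp add: field_simps)
  also have "\<dots> = \<rho> * (b^2 + a^2/\<rho>^2)" using assms by (simp add: field_simps power2_eq_square)
  finally show ?thesis .
qed

locale oneD =
  fixes u u' :: "real \<Rightarrow> real" and k s :: real and d :: nat
  assumes d2: "d \<ge> 2" and k1: "k \<ge> 1"
    and der: "\<And>\<rho>. 0 < \<rho> \<Longrightarrow> (u has_real_derivative u' \<rho>) (at \<rho>)"
    and cu': "continuous_on {0<..} u'"
    and uk: "u k = 0"
begin

definition Q where "Q \<rho> = (1+k-\<rho>) powr s * ((u' \<rho>)^2 + (u \<rho>)^2/\<rho>^2) * \<rho>^(d-1)"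
definition coef where "coef r = r^(d-2) * (1+k+r) * (1+k-r) powr (s-1)"

lemma cu: "continuous_on {0<..} u"
  by (intro continuous_at_imp_continuous_on ballI DERIV_isCont[OF der]) auto

lemma cont_sub:
  assumes "0 < a" shows "continuous_on {a..b} u" "continuous_on {a..b} u'"
proof -
  have "{a..b} \<subseteq> {0<..}" using assms by auto
  thus "continuous_on {a..b} u" "continuous_on {a..b} u'"
    by (auto intro: continuous_on_subset[OF cu] continuous_on_subset[OF cu'])
qed

lemma Q_nonneg: "0 \<le> \<rho> \<Longrightarrow> 0 \<le> Q \<rho>"
  unfolding Q_def by (intro mult_nonneg_nonneg add_nonneg_nonneg) auto

lemma contQ: assumes "0 < a" "b < 1 + k" shows "continuous_on {a..b} Q"
  unfolding Q_def using cont_sub[OF assms(1)] assms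
  by (intro continuous_intros) auto

lemma intQ: assumes "0 < a" "b < 1 + k" shows "Q integrable_on {a..b}"
  by (rule integrable_continuous_interval[OF contQ[OF assms]])

lemma der2: "0 < x \<Longrightarrow> ((\<lambda>\<rho>. (u \<rho>)^2) has_real_derivative 2 * u x * u' x) (at x)"
  using der[of x] by (auto intro!: derivative_eq_intros)

lemma caseA:
  assumes r: "0 < r" "r \<le> (1+k)/2"
  shows "coef r * (u r)^2 \<le> (9 * 2^d * 2 powr \<bar>s\<bar>) * integral {r/2..r} Q"
proof -
  have r2: "0 < r/2" using r by simp
  have cu2: "continuous_on {r/2..r} (\<lambda>\<rho>. (u \<rho>)^2)" using cont_sub[OF r2] by (intro continuous_intros)
  obtain \<rho>0 where \<rho>0: "\<rho>0 \<in> {r/2..r}" "(r - r/2) * (u \<rho>0)^2 \<le> integral {r/2..r} (\<lambda>\<rho>. (u \<rho>)^2)"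
     using min_avg[OF _ cu2] r by auto
  define h where "h \<rho> = \<bar>2 * u \<rho> * u' \<rho>\<bar>" for \<rho>
  have ch: "continuous_on {r/2..r} h" unfolding h_def using cont_sub[OF r2] by (intro continuous_intros)
  have "(u r)^2 - (u \<rho>0)^2 \<le> integral {\<rho>0..r} h"
    using \<rho>0 r ch by (intro ftc_bound[where f'="\<lambda>\<rho>. 2 * u \<rho> * u' \<rho>"] der2 integrable_continuous_interval)
      (auto simp: h_def intro: continuous_on_subset)
  also have "\<dots> \<le> integral {r/2..r} h"
    using \<rho>0 ch by (intro integral_subset_le integrable_continuous_interval) (auto simp: h_def intro: continuous_on_subset)
  moreover have "(u \<rho>0)^2 \<le> (2/r) * integral {r/2..r} (\<lambda>\<rho>. (u \<rho>)^2)"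
    using \<rho>0(2) r by (simp add: field_simps)
  ultimately have "(u r)^2 \<le> (2/r) * integral {r/2..r} (\<lambda>\<rho>. (u \<rho>)^2) + integral {r/2..r} h"
    by linarith
  also have "\<dots> = integral {r/2..r} (\<lambda>\<rho>. (2/r) * (u \<rho>)^2) + integral {r/2..r} h"
    by simp
  also have "\<dots> = integral {r/2..r} (\<lambda>\<rho>. (2/r) * (u \<rho>)^2 + h \<rho>)"
  proof (rule integral_add[symmetric])
    show "(\<lambda>\<rho>. (2/r) * (u \<rho>)^2) integrable_on {r/2..r}"
      using cont_sub[OF r2] by (intro integrable_continuous_interval continuous_intros)
    show "h integrable_on {r/2..r}" using ch by (simp add: integrable_continuous_interval)
  qed
  finally have ur: "(u r)^2 \<le> integral {r/2..r} (\<lambda>\<rho>. (2/r) * (u \<rho>)^2 + h \<rho>)" .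
  define Wr where "Wr = 1 + k - r"
  have Wr: "Wr \<ge> (1+k)/2" "Wr > 0" using r k1 by (auto simp: Wr_def)
  have "coef r = r^(d-2) * ((1+k+r) * Wr powr (s-1))" by (simp add: coef_def Wr_def)
  also have "(1+k+r) * Wr powr (s-1) \<le> (3 * Wr) * Wr powr (s-1)"
    using Wr r by (intro mult_right_mono) auto
  also have "(3 * Wr) * Wr powr (s-1) = 3 * Wr powr s"
    using Wr by (simp add: powr_diff field_simps)
  finally have cb: "coef r \<le> 3 * r^(d-2) * Wr powr s" using r by (simp add: mult_left_mono)
  have "coef r * (u r)^2 \<le> (3 * r^(d-2) * Wr powr s) * (u r)^2"
    using cb by (intro mult_right_mono) auto
  also have "\<dots> \<le> (3 * r^(d-2) * Wr powr s) * integral {r/2..r} (\<lambda>\<rho>. (2/r) * (u \<rho>)^2 + h \<rho>)"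
    using ur r by (intro mult_left_mono) auto
  also have "\<dots> = integral {r/2..r} (\<lambda>\<rho>. (3 * r^(d-2) * Wr powr s) * ((2/r) * (u \<rho>)^2 + h \<rho>))"
    by simp
  also have "\<dots> \<le> integral {r/2..r} (\<lambda>\<rho>. (9 * 2^d * 2 powr \<bar>s\<bar>) * Q \<rho>)"
  proof (rule integral_le)
    show "(\<lambda>\<rho>. (3 * r^(d-2) * Wr powr s) * ((2/r) * (u \<rho>)^2 + h \<rho>)) integrable_on {r/2..r}"
      using cu2 ch cont_sub[OF r2] by (intro integrable_continuous_interval continuous_intros) auto
    show "(\<lambda>\<rho>. (9 * 2^d * 2 powr \<bar>s\<bar>) * Q \<rho>) integrable_on {r/2..r}"
      using r2 r k1 intQ[of "r/2" r] by simp
    fix \<rho> assume \<rho>: "\<rho> \<in> {r/2..r}"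
    hence \<rho>p: "\<rho> > 0" using r by auto
    define P where "P = (u' \<rho>)^2 + (u \<rho>)^2/\<rho>^2"
    have P0: "P \<ge> 0" by (simp add: P_def)
    define W where "W = 1 + k - \<rho>"
    have W: "W > 0" "Wr \<le> W" "W \<le> 2 * Wr" using \<rho> Wr r by (auto simp: W_def Wr_def)
    have a1: "h \<rho> \<le> \<rho> * P" unfolding h_def P_def by (rule amgm_rho[OF \<rho>p])
    have a2: "(2/r) * (u \<rho>)^2 \<le> 2 * \<rho> * P"
    proof -
      have "(2/r) * (u \<rho>)^2 = 2 * \<rho> * ((\<rho>/r) * ((u \<rho>)^2/\<rho>^2))" using \<rho>p r by (simp add: field_simps power2_eq_square)
      also have "\<dots> \<le> 2 * \<rho> * (1 * ((u \<rho>)^2/\<rho>^2))"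
        using \<rho> \<rho>p r by (intro mult_left_mono mult_right_mono) auto
      also have "\<dots> \<le> 2 * \<rho> * P" using \<rho>p by (intro mult_left_mono) (auto simp: P_def)
      finally show ?thesis .
    qed
    have a3: "r^(d-2) \<le> 2^(d-2) * \<rho>^(d-2)"
    proof -
      have "r^(d-2) \<le> (2*\<rho>)^(d-2)" using \<rho> r by (intro power_mono) auto
      thus ?thesis by (simp add: power_mult_distrib)
    qed
    have a4: "Wr powr s \<le> 2 powr \<bar>s\<bar> * W powr s"
      using W Wr by (intro powr_cmp) auto
    have "(3 * r^(d-2) * Wr powr s) * ((2/r) * (u \<rho>)^2 + h \<rho>)
       \<le> (3 * (2^(d-2) * \<rho>^(d-2)) * (2 powr \<bar>s\<bar> * W powr s)) * (3 * \<rho> * P)"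
      using a1 a2 a3 a4 P0 \<rho>p r by (intro mult_mono) (auto simp: h_def)
    also have "\<dots> = (9 * 2^(d-2) * 2 powr \<bar>s\<bar>) * (W powr s * P * (\<rho>^(d-2) * \<rho>))"
      by (simp add: algebra_simps)
    also have "\<rho>^(d-2) * \<rho> = \<rho>^(d-1)"
      using d2 by (metis Suc_diff_Suc Suc_1 Suc_le_lessD power_Suc2)
    also have "(9 * 2^(d-2) * 2 powr \<bar>s\<bar>) * (W powr s * P * \<rho>^(d-1)) = (9 * 2^(d-2) * 2 powr \<bar>s\<bar>) * Q \<rho>"
      by (simp add: Q_def W_def P_def)
    also have "\<dots> \<le> (9 * 2^d * 2 powr \<bar>s\<bar>) * Q \<rho>"
      using Q_nonneg \<rho>p by (intro mult_right_mono) (auto intro!: power_increasing)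
    finally show "(3 * r^(d-2) * Wr powr s) * ((2/r) * (u \<rho>)^2 + h \<rho>) \<le> (9 * 2^d * 2 powr \<bar>s\<bar>) * Q \<rho>" .
  qed
  also have "\<dots> = (9 * 2^d * 2 powr \<bar>s\<bar>) * integral {r/2..r} Q" by simp
  finally show ?thesis .
qed

end

definition Kc :: "nat \<Rightarrow> real \<Rightarrow> real" where
  "Kc d s = 9 * 2^d * 2 powr \<bar>s\<bar> + 3/\<bar>1-s\<bar> + 4^d + 12*4^d/\<bar>s-1\<bar>"
lemma Kc_nonneg: "0 \<le> Kc d s" unfolding Kc_def by (intro add_nonneg_nonneg) auto
context oneD begin

definition B where "B \<rho> = (1+k-\<rho>) powr (s-1) * (u \<rho>)^2"
definition B' where "B' x = (s-1) * (1+k-x) powr (s-1-1) * (0-1) * (u x)^2 + (2 * u x * u' x) * (1+k-x) powr (s-1)"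

lemma derB: "0 < x \<Longrightarrow> x < 1 + k \<Longrightarrow> (B has_real_derivative B' x) (at x)"
  unfolding B_def B'_def
  apply (rule derivative_eq_intros refl der | simp)+
  done

lemma B'_expr:
  assumes "0 < x" "x < 1 + k"
  shows "B' x = (1+k-x) powr s / (1+k-x)^2 * ((1 - s) * (u x)^2 + 2 * (1+k-x) * u x * u' x)"
proof -
  define W where "W = 1 + k - x"
  have W: "W > 0" using assms by (simp add: W_def)
  have p1: "W powr (s-1-1) = W powr s / W^2" and p2: "W powr (s-1) = W powr s / W"
    using W by (simp_all add: powr_diff power2_eq_square)
  show ?thesis unfolding B'_def W_def[symmetric] p1 p2 using W by (simp add: field_simps power2_eq_square)
qed

lemma caseB1:
  assumes s: "s < 1" and r: "(1+k)/2 \<le> r" "r \<le> k"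
  shows "coef r * (u r)^2 \<le> (3/(1-s)) * integral {r..k} Q"
proof -
  have r0: "0 < r" using r k1 by simp
  define h where "h \<rho> = (1+k-\<rho>) powr s * (u' \<rho>)^2 / (1-s)" for \<rho>
  have ch: "continuous_on {r..k} h" unfolding h_def using cont_sub[OF r0] k1 s
    by (intro continuous_intros) auto
  have "(\<lambda>\<rho>. - B \<rho>) k - (\<lambda>\<rho>. - B \<rho>) r \<le> integral {r..k} h"
  proof (rule ftc_bound[where f'="\<lambda>x. - B' x"])
    show "r \<le> k" by fact
    show "h integrable_on {r..k}" using ch by (rule integrable_continuous_interval)
    fix x assume x: "x \<in> {r..k}"
    hence x0: "0 < x" "x < 1 + k" using r0 by auto
    show "((\<lambda>\<rho>. - B \<rho>) has_real_derivative - B' x) (at x)"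
      using derB[OF x0] by (rule derivative_intros)
    define W where "W = 1 + k - x"
    have W: "W > 0" using x0 by (simp add: W_def)
    have "h x + B' x = W powr s / W^2 / (1 - s) * (W * u' x + (1 - s) * u x)^2"
      unfolding B'_expr[OF x0] h_def W_def[symmetric] using W s
      by (simp add: field_simps power2_eq_square)
    also have "\<dots> \<ge> 0" using W s by simp
    finally show "- B' x \<le> h x" by simp
  qed
  hence Br: "B r \<le> integral {r..k} h" by (simp add: B_def uk)
  have "coef r * (u r)^2 = r^(d-2) * (1+k+r) * B r" by (simp add: coef_def B_def)
  also have "\<dots> \<le> r^(d-2) * (1+k+r) * integral {r..k} h"
    using Br r0 k1 by (intro mult_left_mono) auto
  also have "\<dots> = integral {r..k} (\<lambda>\<rho>. r^(d-2) * (1+k+r) * h \<rho>)" by simp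
  also have "\<dots> \<le> integral {r..k} (\<lambda>\<rho>. (3/(1-s)) * Q \<rho>)"
  proof (rule integral_le)
    show "(\<lambda>\<rho>. r^(d-2) * (1+k+r) * h \<rho>) integrable_on {r..k}"
      using ch by (intro integrable_continuous_interval continuous_intros)
    show "(\<lambda>\<rho>. (3/(1-s)) * Q \<rho>) integrable_on {r..k}"
      using integrable_on_cmult_left[OF intQ[of r k], of "3/(1-s)"] r0 by simp
    fix \<rho> assume \<rho>: "\<rho> \<in> {r..k}"
    hence \<rho>p: "0 < \<rho>" using r0 by auto
    define W where "W = 1 + k - \<rho>"
    have W: "W > 0" using \<rho> by (simp add: W_def)
    have "r^(d-2) * (1+k+r) * h \<rho> = (r^(d-2) * (1+k+r)) * (W powr s * (u' \<rho>)^2 / (1-s))"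
      by (simp add: h_def W_def)
    also have "\<dots> \<le> (\<rho>^(d-2) * (3 * \<rho>)) * (W powr s * (u' \<rho>)^2 / (1-s))"
      using \<rho> r r0 s W by (intro mult_right_mono mult_mono power_mono) auto
    also have "\<dots> = (3/(1-s)) * (W powr s * (u' \<rho>)^2 * (\<rho>^(d-2) * \<rho>))"
      by (simp add: field_simps)
    also have "\<rho>^(d-2) * \<rho> = \<rho>^(d-1)"
      using d2 by (metis Suc_diff_Suc Suc_1 Suc_le_lessD power_Suc2)
    also have "(3/(1-s)) * (W powr s * (u' \<rho>)^2 * \<rho>^(d-1)) \<le> (3/(1-s)) * Q \<rho>"
      unfolding Q_def W_def[symmetric] using s W \<rho>p
      by (intro mult_left_mono mult_right_mono) auto
    finally show "r^(d-2) * (1+k+r) * h \<rho> \<le> (3/(1-s)) * Q \<rho>" .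
  qed
  also have "\<dots> = (3/(1-s)) * integral {r..k} Q" by simp
  finally show ?thesis .
qed

lemma caseB2:
  assumes s: "s > 1" and r: "(1+k)/2 \<le> r" "r \<le> k"
  shows "coef r * (u r)^2 \<le> 4^d * integral {r/4..r/2} Q + (12 * 4^d/(s-1)) * integral {r/4..r} Q"
proof -
  have r0: "0 < r" using r k1 by simp
  have r4: "0 < r/4" using r0 by simp
  define h where "h \<rho> = (1+k-\<rho>) powr s * (u' \<rho>)^2 / (s-1)" for \<rho>
  have ch: "continuous_on {r/4..r} h" unfolding h_def using cont_sub[OF r4] k1 s r
    by (intro continuous_intros) auto
  have cB: "continuous_on {r/4..r/2} B" unfolding B_def using cont_sub[OF r4] k1 s r
    by (intro continuous_intros) auto
  obtain \<rho>0 where \<rho>0: "\<rho>0 \<in> {r/4..r/2}" "(r/2 - r/4) * B \<rho>0 \<le> integral {r/4..r/2} B"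
     using min_avg[OF _ cB] r0 by auto
  have "B r - B \<rho>0 \<le> integral {\<rho>0..r} h"
  proof (rule ftc_bound[where f'="B'"])
    show "\<rho>0 \<le> r" using \<rho>0 r0 by simp
    show "h integrable_on {\<rho>0..r}" using ch \<rho>0
      by (intro integrable_continuous_interval) (auto intro: continuous_on_subset)
    fix x assume x: "x \<in> {\<rho>0..r}"
    hence x0: "0 < x" "x < 1 + k" using r0 \<rho>0 r by auto
    show "(B has_real_derivative B' x) (at x)" using derB[OF x0] .
    define W where "W = 1 + k - x"
    have W: "W > 0" using x0 by (simp add: W_def)
    have "h x - B' x = W powr s / W^2 / (s - 1) * (W * u' x - (s - 1) * u x)^2"
      unfolding B'_expr[OF x0] h_def W_def[symmetric] using W s
      by (simp add: field_simps power2_eq_square)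
    also have "\<dots> \<ge> 0" using W s by simp
    finally show "B' x \<le> h x" by simp
  qed
  also have "\<dots> \<le> integral {r/4..r} h"
    using \<rho>0 ch r0 s by (intro integral_subset_le integrable_continuous_interval)
      (auto simp: h_def intro: continuous_on_subset)
  moreover have "B \<rho>0 \<le> (4/r) * integral {r/4..r/2} B"
    using \<rho>0(2) r0 by (simp add: field_simps)
  ultimately have Br: "B r \<le> (4/r) * integral {r/4..r/2} B + integral {r/4..r} h"
    by linarith
  define c where "c = r^(d-2) * (1+k+r)"
  have c0: "c \<ge> 0" using r0 k1 by (simp add: c_def)
  have "coef r * (u r)^2 = c * B r" by (simp add: coef_def B_def c_def)
  also have "\<dots> \<le> c * ((4/r) * integral {r/4..r/2} B + integral {r/4..r} h)"
    using Br c0 by (intro mult_left_mono) auto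
  also have "\<dots> = integral {r/4..r/2} (\<lambda>\<rho>. (c * (4/r)) * B \<rho>) + integral {r/4..r} (\<lambda>\<rho>. c * h \<rho>)"
    by (simp add: algebra_simps)
  also have "integral {r/4..r/2} (\<lambda>\<rho>. (c * (4/r)) * B \<rho>) \<le> integral {r/4..r/2} (\<lambda>\<rho>. 4^d * Q \<rho>)"
  proof (rule integral_le)
    show "(\<lambda>\<rho>. (c * (4/r)) * B \<rho>) integrable_on {r/4..r/2}"
      using cB by (intro integrable_continuous_interval continuous_intros)
    show "(\<lambda>\<rho>. 4^d * Q \<rho>) integrable_on {r/4..r/2}"
      using integrable_on_cmult_left[OF intQ[of "r/4" "r/2"], of "4^d"] r0 r k1 by simp
    fix \<rho> assume \<rho>: "\<rho> \<in> {r/4..r/2}"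
    hence \<rho>p: "0 < \<rho>" using r0 by auto
    define W where "W = 1 + k - \<rho>"
    have W: "W > 0" "1+k+r \<le> 4 * W" using \<rho> r k1 by (auto simp: W_def)
    have a3: "r^(d-2) \<le> 4^(d-2) * \<rho>^(d-2)"
    proof -
      have "r^(d-2) \<le> (4*\<rho>)^(d-2)" using \<rho> r0 by (intro power_mono) auto
      thus ?thesis by (simp add: power_mult_distrib)
    qed
    have a5: "4 / r \<le> 4 / \<rho>" using \<rho> \<rho>p by (simp add: frac_le)
    have "(c * (4/r)) * B \<rho> = (r^(d-2) * (1+k+r) * (4/r)) * (W powr (s-1) * (u \<rho>)^2)"
      by (simp add: c_def B_def W_def)
    also have "\<dots> \<le> (4^(d-2) * \<rho>^(d-2) * (4 * W) * (4/\<rho>)) * (W powr (s-1) * (u \<rho>)^2)"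
      using a3 a5 W r0 \<rho>p k1 by (intro mult_right_mono mult_mono) auto
    also have "\<dots> = 4^(d-2) * 16 * (W * W powr (s-1)) * ((u \<rho>)^2 / \<rho>^2) * (\<rho>^(d-2) * \<rho>)"
      using \<rho>p by (simp add: field_simps power2_eq_square)
    also have "\<rho>^(d-2) * \<rho> = \<rho>^(d-1)"
      using d2 by (metis Suc_diff_Suc Suc_1 Suc_le_lessD power_Suc2)
    also have "W * W powr (s-1) = W powr s" using W by (simp add: powr_diff)
    also have "4^(d-2) * 16 = (4::real)^d"
    proof -
      have "d = (d-2) + 2" using d2 by simp
      hence "(4::real)^d = 4^(d-2) * 4^2" by (metis power_add)
      thus ?thesis by simp
    qed
    also have "4^d * W powr s * ((u \<rho>)^2 / \<rho>^2) * \<rho>^(d-1) \<le> 4^d * Q \<rho>"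
      unfolding Q_def W_def[symmetric] using W \<rho>p
      by (simp add: algebra_simps mult_left_mono)
    finally show "(c * (4/r)) * B \<rho> \<le> 4^d * Q \<rho>" .
  qed
  also have "integral {r/4..r} (\<lambda>\<rho>. c * h \<rho>) \<le> integral {r/4..r} (\<lambda>\<rho>. (12 * 4^d/(s-1)) * Q \<rho>)"
  proof (rule integral_le)
    show "(\<lambda>\<rho>. c * h \<rho>) integrable_on {r/4..r}"
      using ch by (intro integrable_continuous_interval continuous_intros)
    show "(\<lambda>\<rho>. (12 * 4^d/(s-1)) * Q \<rho>) integrable_on {r/4..r}"
      using integrable_on_cmult_left[OF intQ[of "r/4" "r"], of "12 * 4^d/(s-1)"] r0 r k1 by simp
    fix \<rho> assume \<rho>: "\<rho> \<in> {r/4..r}"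
    hence \<rho>p: "0 < \<rho>" using r0 by auto
    define W where "W = 1 + k - \<rho>"
    have W: "W > 0" using \<rho> r k1 by (auto simp: W_def)
    have a3: "r^(d-2) \<le> 4^(d-2) * \<rho>^(d-2)"
    proof -
      have "r^(d-2) \<le> (4*\<rho>)^(d-2)" using \<rho> r0 by (intro power_mono) auto
      thus ?thesis by (simp add: power_mult_distrib)
    qed
    have a6: "1+k+r \<le> 12 * \<rho>" using \<rho> r by auto
    have "c * h \<rho> = (r^(d-2) * (1+k+r)) * (W powr s * (u' \<rho>)^2 / (s-1))"
      by (simp add: c_def h_def W_def)
    also have "\<dots> \<le> (4^(d-2) * \<rho>^(d-2) * (12 * \<rho>)) * (W powr s * (u' \<rho>)^2 / (s-1))"
      using a3 a6 W r0 \<rho>p k1 s by (intro mult_right_mono mult_mono) auto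
    also have "\<dots> = (12 * 4^(d-2) / (s-1)) * (W powr s * (u' \<rho>)^2 * (\<rho>^(d-2) * \<rho>))"
      by (simp add: field_simps)
    also have "\<rho>^(d-2) * \<rho> = \<rho>^(d-1)"
      using d2 by (metis Suc_diff_Suc Suc_1 Suc_le_lessD power_Suc2)
    also have "(12 * 4^(d-2) / (s-1)) * (W powr s * (u' \<rho>)^2 * \<rho>^(d-1)) \<le> (12 * 4^d / (s-1)) * (W powr s * (u' \<rho>)^2 * \<rho>^(d-1))"
      using s W \<rho>p by (intro mult_right_mono divide_right_mono) (auto intro!: power_increasing)
    also have "\<dots> \<le> (12 * 4^d/(s-1)) * Q \<rho>"
      unfolding Q_def W_def[symmetric] using s W \<rho>p
      by (intro mult_left_mono mult_right_mono) auto
    finally show "c * h \<rho> \<le> (12 * 4^d/(s-1)) * Q \<rho>" .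
  qed
  finally show ?thesis by simp
qed

definition NN where "NN = (\<integral>\<^sup>+\<rho>. ennreal (Q \<rho>) * indicator {0<..k} \<rho> \<partial>lborel)"

lemma int_le_NN:
  assumes "0 < a" "a \<le> b" "b \<le> k"
  shows "ennreal (integral {a..b} Q) \<le> NN" "0 \<le> integral {a..b} Q"
proof -
  have hi: "(Q has_integral integral {a..b} Q) {a..b}" using intQ[of a b] assms by (simp add: integrable_integral)
  have "ennreal (integral {a..b} Q) = (\<integral>\<^sup>+\<rho>. ennreal (Q \<rho>) * indicator {a..b} \<rho> \<partial>lborel)"
    using assms by (intro nn_integral_has_integral_lebesgue'[symmetric] hi Q_nonneg) auto
  also have "\<dots> \<le> NN" unfolding NN_def
    using assms by (intro nn_integral_mono) (auto simp: indicator_def)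
  finally show "ennreal (integral {a..b} Q) \<le> NN" .
  show "0 \<le> integral {a..b} Q" using assms by (intro integral_nonneg intQ Q_nonneg) auto
qed


lemma oneD_nn:
  assumes s: "s \<noteq> 1" and r: "0 < r" "r \<le> k"
  shows "ennreal (coef r * (u r)^2) \<le> ennreal (Kc d s) * NN"
proof -
  have K0: "0 \<le> 9 * 2^d * 2 powr \<bar>s\<bar>" "0 \<le> 3/\<bar>1-s\<bar>" "0 \<le> (4::real)^d" "0 \<le> 12*4^d/\<bar>s-1\<bar>" by auto
  show ?thesis
  proof (cases "r \<le> (1+k)/2")
    case True
    have I: "ennreal (integral {r/2..r} Q) \<le> NN" "0 \<le> integral {r/2..r} Q" using int_le_NN[of "r/2" r] r by auto
    have "ennreal (coef r * (u r)^2) \<le> ennreal ((9 * 2^d * 2 powr \<bar>s\<bar>) * integral {r/2..r} Q)"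
      using caseA[OF r(1) True] by (rule ennreal_leI)
    also have "\<dots> = ennreal (9 * 2^d * 2 powr \<bar>s\<bar>) * ennreal (integral {r/2..r} Q)"
      using I K0 by (simp add: ennreal_mult)
    also have "\<dots> \<le> ennreal (Kc d s) * NN"
      using I K0 by (intro mult_mono ennreal_leI) (auto simp: Kc_def)
    finally show ?thesis .
  next
    case False
    show ?thesis
    proof (cases "s < 1")
      case True
      have I: "ennreal (integral {r..k} Q) \<le> NN" "0 \<le> integral {r..k} Q" using int_le_NN[of r k] r by auto
      have "ennreal (coef r * (u r)^2) \<le> ennreal ((3/\<bar>1-s\<bar>) * integral {r..k} Q)"
        using caseB1[OF True _ r(2)] False True by (intro ennreal_leI) auto
      also have "\<dots> = ennreal (3/\<bar>1-s\<bar>) * ennreal (integral {r..k} Q)"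
        using I K0 by (intro ennreal_mult) auto
      also have "\<dots> \<le> ennreal (Kc d s) * NN"
        using I K0 by (intro mult_mono ennreal_leI) (auto simp: Kc_def)
      finally show ?thesis .
    next
      case F2: False
      hence s1: "s > 1" using s by simp
      have I1: "ennreal (integral {r/4..r/2} Q) \<le> NN" "0 \<le> integral {r/4..r/2} Q" using int_le_NN[of "r/4" "r/2"] r by auto
      have I2: "ennreal (integral {r/4..r} Q) \<le> NN" "0 \<le> integral {r/4..r} Q" using int_le_NN[of "r/4" r] r by auto
      have "ennreal (coef r * (u r)^2) \<le> ennreal (4^d * integral {r/4..r/2} Q + (12 * 4^d/\<bar>s-1\<bar>) * integral {r/4..r} Q)"
        using caseB2[OF s1 _ r(2)] False s1 by (intro ennreal_leI) auto
      also have "\<dots> = ennreal (4^d * integral {r/4..r/2} Q) + ennreal ((12 * 4^d/\<bar>s-1\<bar>) * integral {r/4..r} Q)"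
        using I1 I2 K0 by (intro ennreal_plus) auto
      also have "\<dots> = ennreal (4^d) * ennreal (integral {r/4..r/2} Q) + ennreal (12 * 4^d/\<bar>s-1\<bar>) * ennreal (integral {r/4..r} Q)"
        using I1 I2 K0 by (simp only: ennreal_mult)
      also have "\<dots> \<le> ennreal (4^d) * NN + ennreal (12 * 4^d/\<bar>s-1\<bar>) * NN"
        using I1 I2 by (intro add_mono mult_left_mono) auto
      also have "\<dots> = ennreal (4^d + 12 * 4^d/\<bar>s-1\<bar>) * NN"
        using K0 by (subst ennreal_plus) (auto simp: distrib_right)
      also have "\<dots> \<le> ennreal (Kc d s) * NN"
        using K0 by (intro mult_right_mono ennreal_leI) (auto simp: Kc_def)
      finally show ?thesis .
    qed
  qed
qed

end


lemma sphere_nn: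
  fixes g :: "'a::euclidean_space \<Rightarrow> ennreal"
  assumes g[measurable]: "g \<in> borel_measurable borel"
  shows "(\<integral>\<^sup>+\<omega>. g \<omega> \<partial>(sphere_measure::'a measure))
       = (\<integral>\<^sup>+x. indicator (ball 0 1 - {0}) x * (ennreal (real DIM('a)) * g (x /\<^sub>R norm x)) \<partial>lborel)"
proof -
  have m: "(\<lambda>x::'a. x /\<^sub>R norm x) \<in> measurable (density (restrict_space lborel (ball 0 1 - {0})) (\<lambda>_. ennreal (real DIM('a)))) (restrict_space borel (sphere 0 1))"
  proof -
    have "(\<lambda>x::'a. x /\<^sub>R norm x) \<in> measurable (restrict_space lborel (ball 0 1 - {0})) (restrict_space borel (sphere 0 1))"
      by (rule measurable_restrict_space2) (auto intro: measurable_restrict_space1)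
    thus ?thesis by simp
  qed
  have "(\<integral>\<^sup>+\<omega>. g \<omega> \<partial>(sphere_measure::'a measure))
     = (\<integral>\<^sup>+x. g (x /\<^sub>R norm x) \<partial>(density (restrict_space lborel (ball 0 1 - {0})) (\<lambda>_. ennreal (real DIM('a)))))"
    unfolding sphere_measure_def by (rule nn_integral_distr[OF m]) (simp, rule measurable_restrict_space1, rule g)
  also have "\<dots> = (\<integral>\<^sup>+x. ennreal (real DIM('a)) * g (x /\<^sub>R norm x) \<partial>(restrict_space lborel (ball 0 1 - {0})))"
    by (rule nn_integral_density) (auto intro: measurable_restrict_space1)
  also have "\<dots> = (\<integral>\<^sup>+x. ennreal (real DIM('a)) * g (x /\<^sub>R norm x) * indicator (ball 0 1 - {0}) x \<partial>lborel)"
    by (rule nn_integral_restrict_space) auto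
  finally show ?thesis by (simp add: mult_ac)
qed


lemma enn_sq_le: "(a::ennreal)^2 \<le> b^2 \<Longrightarrow> a \<le> b"
proof (rule ccontr)
  assume h: "a^2 \<le> b^2" "\<not> a \<le> b"
  hence ba: "b < a" by simp
  show False
  proof (cases a rule: ennreal_cases)
    case (real x)
    then obtain y where y: "b = ennreal y" "0 \<le> y" using ba by (cases b rule: ennreal_cases) auto
    have "y < x" using ba real y by (simp add: ennreal_less_iff)
    hence "y^2 < x^2" using y by (intro power_strict_mono) auto
    moreover have "ennreal (x^2) \<le> ennreal (y^2)" using h real y by (simp add: ennreal_power)
    ultimately show False using y by (simp add: ennreal_le_iff)
  next
    case top
    hence "b^2 = top" using h by (simp add: top_unique)
    hence "b = top" by (simp add: power_eq_top_ennreal)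
    thus False using ba top by simp
  qed
qed
lemma L2_sq: "(L2_norm M g)^2 = (\<integral>\<^sup>+x. ennreal ((g x)^2) \<partial>M)"
proof (cases "(\<integral>\<^sup>+x. ennreal ((g x)^2) \<partial>M) = \<infinity>")
  case True thus ?thesis by (simp add: L2_norm_def)
next
  case False
  define I where "I = (\<integral>\<^sup>+x. ennreal ((g x)^2) \<partial>M)"
  have "I = ennreal (enn2real I)" using False unfolding I_def by (simp add: ennreal_enn2real_if)
  moreover have "ennreal (sqrt (enn2real I))^2 = ennreal (enn2real I)"
    by (subst ennreal_power) auto
  ultimately show ?thesis using False unfolding L2_norm_def Let_def I_def[symmetric] by simp
qed


lemma cont_bapply:
  assumes "continuous_on S f" "continuous_on S g"
  shows "continuous_on S (\<lambda>x. blinfun_apply (f x) (g x))"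
  using bounded_bilinear.continuous_on[OF bounded_bilinear_blinfun_apply assms] .

lemma phi_zero_outside:
  fixes \<phi> :: "'a::euclidean_space \<Rightarrow> real"
  assumes c: "continuous_on UNIV \<phi>" and sp: "supp \<phi> \<subseteq> cball 0 k" and k: "k > 0"
    and x: "norm x \<ge> k"
  shows "\<phi> x = 0"
proof (rule ccontr)
  assume nz: "\<phi> x \<noteq> 0"
  have "open {y. \<phi> y \<noteq> 0}" using c by (intro open_Collect_neq) (auto intro: continuous_intros)
  then obtain e where e: "e > 0" "ball x e \<subseteq> {y. \<phi> y \<noteq> 0}"
    using nz by (auto simp: open_contains_ball)
  have xn: "norm x > 0" using x k by linarith
  define y where "y = (1 + e / (2 * norm x)) *\<^sub>R x"
  have "y - x = (e / (2 * norm x)) *\<^sub>R x" by (simp add: y_def algebra_simps)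
  hence "norm (y - x) = e/2" using e xn by simp
  hence "dist x y = e/2" by (simp add: dist_norm norm_minus_commute)
  hence "y \<in> ball x e" using e by simp
  hence "\<phi> y \<noteq> 0" using e by auto
  hence "y \<in> supp \<phi>" unfolding supp_def by (auto intro: closure_subset[THEN subsetD])
  hence "norm y \<le> k" using sp by auto
  moreover have "norm y = (1 + e / (2 * norm x)) * norm x" using xn e by (simp add: y_def)
  hence "norm y = norm x + e/2" using xn by (simp add: field_simps)
  ultimately show False using x e by simp
qed

definition Fk :: "('a::euclidean_space \<Rightarrow> 'a \<Rightarrow>\<^sub>L real) \<Rightarrow> ('a \<Rightarrow> real) \<Rightarrow> real \<Rightarrow> real \<Rightarrow> 'a \<Rightarrow> ennreal" where
  "Fk D \<phi> k s y = ennreal (indicator (cball 0 k - {0}) y *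
      ((1+k-norm y) powr s * ((blinfun_apply (D y) (y /\<^sub>R norm y))^2 + (\<phi> y)^2/(norm y)^2)))"

lemma ray_bound:
  fixes \<phi> :: "'a::euclidean_space \<Rightarrow> real"
  assumes Dd: "\<And>x. (\<phi> has_derivative blinfun_apply (D x)) (at x)" and Dc: "continuous_on UNIV D"
    and z: "\<And>x. norm x \<ge> k \<Longrightarrow> \<phi> x = 0" and k1: "k \<ge> 1" and s: "s \<noteq> 1" and d2: "DIM('a) \<ge> 2"
    and \<omega>: "norm \<omega> = 1" and r: "0 < r" "r \<le> k"
  shows "ennreal (r^(DIM('a)-2) * (1+k+r) * (1+k-r) powr (s-1) * (\<phi> (r *\<^sub>R \<omega>))^2)
     \<le> ennreal (Kc DIM('a) s) * (\<integral>\<^sup>+\<rho>. indicator {0<..} \<rho> * ennreal (\<rho> ^ (DIM('a) - 1)) * Fk D \<phi> k s (\<rho> *\<^sub>R \<omega>) \<partial>lborel)"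
proof -
  define u where "u \<rho> = \<phi> (\<rho> *\<^sub>R \<omega>)" for \<rho>
  define u' where "u' \<rho> = blinfun_apply (D (\<rho> *\<^sub>R \<omega>)) \<omega>" for \<rho>
  interpret oneD u u' k s "DIM('a)"
  proof
    show "2 \<le> DIM('a)" by fact
    show "1 \<le> k" by fact
    fix \<rho> :: real assume "0 < \<rho>"
    have "((\<lambda>\<rho>. \<phi> (\<rho> *\<^sub>R \<omega>)) has_derivative (\<lambda>h. blinfun_apply (D (\<rho> *\<^sub>R \<omega>)) (h *\<^sub>R \<omega>))) (at \<rho>)"
      by (rule has_derivative_compose[OF _ Dd]) (auto intro!: derivative_eq_intros)
    moreover have "(\<lambda>h. blinfun_apply (D (\<rho> *\<^sub>R \<omega>)) (h *\<^sub>R \<omega>)) = (*) (u' \<rho>)"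
      by (auto simp: u'_def blinfun.scaleR_right)
    ultimately show "(u has_real_derivative u' \<rho>) (at \<rho>)"
      unfolding has_field_derivative_def u_def by simp
  next
    have "continuous_on {0<..} (\<lambda>\<rho>::real. D (\<rho> *\<^sub>R \<omega>))"
      by (rule continuous_on_compose2[OF Dc]) (auto intro: continuous_intros)
    thus "continuous_on {0<..} u'" unfolding u'_def by (intro cont_bapply continuous_intros)
  next
    show "u k = 0" using z \<omega> k1 by (simp add: u_def)
  qed
  have "ennreal (coef r * (u r)^2) \<le> ennreal (Kc DIM('a) s) * NN" by (rule oneD_nn[OF s r])
  moreover have "NN = (\<integral>\<^sup>+\<rho>. indicator {0<..} \<rho> * ennreal (\<rho> ^ (DIM('a) - 1)) * Fk D \<phi> k s (\<rho> *\<^sub>R \<omega>) \<partial>lborel)"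
    unfolding NN_def
  proof (rule nn_integral_cong)
    fix \<rho> :: real
    show "ennreal (Q \<rho>) * indicator {0<..k} \<rho> = indicator {0<..} \<rho> * ennreal (\<rho> ^ (DIM('a) - 1)) * Fk D \<phi> k s (\<rho> *\<^sub>R \<omega>)"
    proof (cases "0 < \<rho> \<and> \<rho> \<le> k")
      case True
      have e1: "(\<rho> *\<^sub>R \<omega>) /\<^sub>R norm (\<rho> *\<^sub>R \<omega>) = \<omega>" "norm (\<rho> *\<^sub>R \<omega>) = \<rho>" using True \<omega> by auto
      have "\<rho> *\<^sub>R \<omega> \<in> cball 0 k - {0}" using True \<omega> by auto
      hence "Fk D \<phi> k s (\<rho> *\<^sub>R \<omega>) = ennreal ((1+k-\<rho>) powr s * ((u' \<rho>)^2 + (u \<rho>)^2/\<rho>^2))"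
        unfolding Fk_def e1 by (simp add: u_def u'_def)
      moreover have "ennreal (\<rho> ^ (DIM('a) - 1)) * ennreal ((1+k-\<rho>) powr s * ((u' \<rho>)^2 + (u \<rho>)^2/\<rho>^2)) = ennreal (Q \<rho>)"
        using True by (subst ennreal_mult[symmetric]) (auto simp: Q_def mult_ac)
      ultimately show ?thesis using True by (simp add: mult.assoc)
    next
      case False
      show ?thesis
      proof (cases "\<rho> \<le> 0")
        case True thus ?thesis by simp
      next
        case F2: False
        hence "\<rho> > k" using False by simp
        hence "\<rho> *\<^sub>R \<omega> \<notin> cball 0 k" using \<omega> k1 by auto
        thus ?thesis using False by (simp add: Fk_def)
      qed
    qed
  qed
  ultimately show ?thesis by (simp add: coef_def u_def)
qed


lemma sq_powr_half: "0 < (x::real) \<Longrightarrow> (x powr (a/2))^2 = x powr a"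
  by (simp add: power2_eq_square powr_add[symmetric])

lemma Fk_meas:
  fixes \<phi> :: "'a::euclidean_space \<Rightarrow> real"
  assumes Dc: "continuous_on UNIV D" and c\<phi>: "continuous_on UNIV \<phi>" and k: "k \<ge> 1"
  shows "Fk D \<phi> k s \<in> borel_measurable borel"
proof -
  define A :: "'a set" where "A = cball 0 k - {0}"
  have A: "A \<in> sets borel" unfolding A_def by (intro sets.Diff) auto
  define R where "R y = blinfun_apply (D y) (y /\<^sub>R norm y)" for y
  have "continuous_on A R"
    using continuous_on_subset[OF Dc] unfolding A_def R_def
    by (intro cont_bapply continuous_intros) auto
  moreover have "continuous_on A \<phi>" using continuous_on_subset[OF c\<phi>] by auto
  ultimately have "continuous_on A (\<lambda>y. (1+k-norm y) powr s * ((R y)^2 + (\<phi> y)^2/(norm y)^2))"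
    unfolding A_def using k by (intro continuous_intros) auto
  from borel_measurable_continuous_on_indicator[OF A this]
  have "(\<lambda>y. indicator A y * ((1+k-norm y) powr s * ((R y)^2 + (\<phi> y)^2/(norm y)^2))) \<in> borel_measurable borel"
    by simp
  thus ?thesis unfolding Fk_def A_def[symmetric] R_def[symmetric] by measurable
qed

lemma rad_eq:
  assumes Dd: "\<And>x. (\<phi> has_derivative blinfun_apply (D x)) (at x)"
  shows "radial_deriv \<phi> y = blinfun_apply (D y) (y /\<^sub>R norm y)"
  unfolding radial_deriv_def using frechet_derivative_at[OF Dd[of y]] by simp

lemma rad_meas:
  fixes \<phi> :: "'a::euclidean_space \<Rightarrow> real"
  assumes Dd: "\<And>x. (\<phi> has_derivative blinfun_apply (D x)) (at x)" and Dc: "continuous_on UNIV D"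
  shows "radial_deriv \<phi> \<in> borel_measurable borel"
proof -
  define R where "R y = blinfun_apply (D y) (y /\<^sub>R norm y)" for y
  have "continuous_on (-{0}) R"
    using continuous_on_subset[OF Dc] unfolding R_def
    by (intro cont_bapply continuous_intros) auto
  from borel_measurable_continuous_on_indicator[OF _ this]
  have "(\<lambda>y. indicator (-{0}) y *\<^sub>R R y) \<in> borel_measurable borel" by auto
  moreover have "(\<lambda>y. indicator (-{0}) y *\<^sub>R R y) = radial_deriv \<phi>"
    by (auto simp: rad_eq[OF Dd] R_def indicator_def fun_eq_iff)
  ultimately show ?thesis by simp
qed

theorem proposition2p2:
  fixes s :: real
  assumes "DIM('a::euclidean_space) \<ge> 2" and "s \<noteq> 1"
  shows "\<exists>C::real. \<forall>(k::real) (\<phi>::'a \<Rightarrow> real).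
           k \<ge> 1 \<longrightarrow> C1_fun \<phi> \<longrightarrow> supp \<phi> \<subseteq> cball 0 k \<longrightarrow>
           (SUP r\<in>{0<..k}.
               ennreal (r powr ((real DIM('a) - 2) / 2) * (1 + k + r) powr (1/2)
                        * (1 + k - r) powr ((s - 1) / 2))
               * L2_norm sphere_measure (\<lambda>\<omega>. \<phi> (r *\<^sub>R \<omega>)))
           \<le> ennreal C *
             (L2_norm lborel (\<lambda>x. (1 + k - norm x) powr (s/2) * radial_deriv \<phi> x)
              + L2_norm lborel (\<lambda>x. (1 + k - norm x) powr (s/2) * (\<phi> x / norm x)))"
proof -
  note d2 = assms(1) and s = assms(2)
  define K where "K = Kc DIM('a) s"
  have K0: "0 \<le> K" by (simp add: K_def Kc_nonneg)
  define C where "C = sqrt K"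
  show ?thesis
  proof (intro exI[of _ C] allI impI)
    fix k :: real and \<phi> :: "'a \<Rightarrow> real"
    assume k1: "k \<ge> 1" and c1: "C1_fun \<phi>" and sp: "supp \<phi> \<subseteq> cball 0 k"
    obtain D where Dd: "\<And>x. (\<phi> has_derivative blinfun_apply (D x)) (at x)" and Dc: "continuous_on UNIV D"
      using c1 unfolding C1_fun_def by blast
    have c\<phi>: "continuous_on UNIV \<phi>"
      using Dd by (intro continuous_at_imp_continuous_on) (auto intro: has_derivative_continuous)
    have \<phi>m[measurable]: "\<phi> \<in> borel_measurable borel" using c\<phi> by (rule borel_measurable_continuous_onI)
    have radm[measurable]: "radial_deriv \<phi> \<in> borel_measurable borel" by (rule rad_meas[OF Dd Dc])
    have z: "\<And>x. norm x \<ge> k \<Longrightarrow> \<phi> x = 0" using phi_zero_outside[OF c\<phi> sp] k1 by simp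
    define F where "F = Fk D \<phi> k s"
    have Fm: "F \<in> borel_measurable borel" unfolding F_def using Fk_meas[OF Dc c\<phi> k1] .
    define A where "A x = (1 + k - norm x) powr (s/2) * radial_deriv \<phi> x" for x
    define B where "B x = (1 + k - norm x) powr (s/2) * (\<phi> x / norm x)" for x
    define L1 where "L1 = L2_norm lborel A"
    define L2 where "L2 = L2_norm lborel B"
    define INNER where "INNER x = (\<integral>\<^sup>+\<rho>. indicator {0<..} \<rho> * ennreal (\<rho> ^ (DIM('a) - 1)) * F (\<rho> *\<^sub>R (x /\<^sub>R norm x)) \<partial>lborel)" for x
    have polar_le: "ennreal (real DIM('a)) * (\<integral>\<^sup>+x. indicator (ball 0 1 - {0}) x * INNER x \<partial>lborel) \<le> L1^2 + L2^2"
    proof -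
      have "ennreal (real DIM('a)) * (\<integral>\<^sup>+x. indicator (ball 0 1 - {0}) x * INNER x \<partial>lborel)
          = (\<integral>\<^sup>+y. indicator (-{0}) y * F y \<partial>lborel)"
        unfolding INNER_def by (rule polar[OF Fm])
      also have "\<dots> \<le> (\<integral>\<^sup>+y. ennreal ((A y)^2) + ennreal ((B y)^2) \<partial>lborel)"
      proof (rule nn_integral_mono)
        fix y :: 'a
        show "indicator (-{0}) y * F y \<le> ennreal ((A y)^2) + ennreal ((B y)^2)"
        proof (cases "y \<in> cball 0 k - {0}")
          case True
          have w: "0 < 1 + k - norm y" using True by auto
          have "(A y)^2 + (B y)^2 = (1+k-norm y) powr s * ((blinfun_apply (D y) (y /\<^sub>R norm y))^2 + (\<phi> y)^2/(norm y)^2)"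
            unfolding A_def B_def rad_eq[OF Dd] power_mult_distrib sq_powr_half[OF w]
            by (simp add: algebra_simps power_divide)
          hence "F y = ennreal ((A y)^2 + (B y)^2)" using True by (simp add: F_def Fk_def)
          also have "\<dots> = ennreal ((A y)^2) + ennreal ((B y)^2)" by (intro ennreal_plus) auto
          finally show ?thesis using True by simp
        next
          case False thus ?thesis by (auto simp: F_def Fk_def)
        qed
      qed
      also have "\<dots> = (\<integral>\<^sup>+y. ennreal ((A y)^2) \<partial>lborel) + (\<integral>\<^sup>+y. ennreal ((B y)^2) \<partial>lborel)"
        unfolding A_def B_def by (rule nn_integral_add) measurable
      also have "\<dots> = L1^2 + L2^2" by (simp add: L1_def L2_def L2_sq)
      finally show ?thesis .
    qed
    show "(SUP r\<in>{0<..k}.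
               ennreal (r powr ((real DIM('a) - 2) / 2) * (1 + k + r) powr (1/2)
                        * (1 + k - r) powr ((s - 1) / 2))
               * L2_norm sphere_measure (\<lambda>\<omega>. \<phi> (r *\<^sub>R \<omega>)))
           \<le> ennreal C *
             (L2_norm lborel (\<lambda>x. (1 + k - norm x) powr (s/2) * radial_deriv \<phi> x)
              + L2_norm lborel (\<lambda>x. (1 + k - norm x) powr (s/2) * (\<phi> x / norm x)))"
      unfolding A_def[symmetric] B_def[symmetric] L1_def[symmetric] L2_def[symmetric]
    proof (rule SUP_least)
      fix r assume r: "r \<in> {0<..k}"
      hence r0: "0 < r" and rk: "r \<le> k" by auto
      define c where "c = r powr ((real DIM('a) - 2) / 2) * (1 + k + r) powr (1/2) * (1 + k - r) powr ((s - 1) / 2)"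
      define coef where "coef = r^(DIM('a)-2) * (1+k+r) * (1+k-r) powr (s-1)"
      have c0: "0 \<le> c" by (simp add: c_def)
      have cc: "c^2 = coef"
      proof -
        have "c^2 = (r powr ((real DIM('a) - 2) / 2))^2 * ((1 + k + r) powr (1/2))^2 * ((1 + k - r) powr ((s - 1) / 2))^2"
          by (simp add: c_def power_mult_distrib)
        also have "\<dots> = r powr (real DIM('a) - 2) * (1+k+r) powr 1 * (1+k-r) powr (s-1)"
          using r0 rk k1 by (simp only: sq_powr_half)
        also have "r powr (real DIM('a) - 2) = r^(DIM('a)-2)"
          using r0 d2 by (simp add: powr_realpow[symmetric] of_nat_diff)
        finally show ?thesis using r0 rk k1 by (simp add: coef_def)
      qed
      define S where "S = (\<integral>\<^sup>+\<omega>. ennreal ((\<phi> (r *\<^sub>R \<omega>))^2) \<partial>(sphere_measure::'a measure))"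
      have "(ennreal c * L2_norm sphere_measure (\<lambda>\<omega>. \<phi> (r *\<^sub>R \<omega>)))^2 = ennreal coef * S"
        unfolding power_mult_distrib L2_sq S_def using c0 by (simp add: ennreal_power cc)
      also have "ennreal coef * S = (\<integral>\<^sup>+x. indicator (ball 0 1 - {0}) x * (ennreal (real DIM('a)) * ennreal (coef * (\<phi> (r *\<^sub>R (x /\<^sub>R norm x)))^2)) \<partial>lborel)"
      proof -
        have "S = (\<integral>\<^sup>+x. indicator (ball 0 1 - {0}) x * (ennreal (real DIM('a)) * ennreal ((\<phi> (r *\<^sub>R (x /\<^sub>R norm x)))^2)) \<partial>lborel)"
          unfolding S_def by (rule sphere_nn) measurable
        hence "ennreal coef * S = (\<integral>\<^sup>+x. ennreal coef * (indicator (ball 0 1 - {0}) x * (ennreal (real DIM('a)) * ennreal ((\<phi> (r *\<^sub>R (x /\<^sub>R norm x)))^2))) \<partial>lborel)"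
          by (simp add: nn_integral_cmult)
        also have "\<dots> = (\<integral>\<^sup>+x. indicator (ball 0 1 - {0}) x * (ennreal (real DIM('a)) * ennreal (coef * (\<phi> (r *\<^sub>R (x /\<^sub>R norm x)))^2)) \<partial>lborel)"
          using r0 rk k1 by (intro nn_integral_cong) (auto simp: ennreal_mult coef_def mult_ac)
        finally show ?thesis .
      qed
      also have "\<dots> \<le> (\<integral>\<^sup>+x. indicator (ball 0 1 - {0}) x * (ennreal (real DIM('a)) * (ennreal K * INNER x)) \<partial>lborel)"
      proof (rule nn_integral_mono)
        fix x :: 'a
        show "indicator (ball 0 1 - {0}) x * (ennreal (real DIM('a)) * ennreal (coef * (\<phi> (r *\<^sub>R (x /\<^sub>R norm x)))^2))
            \<le> indicator (ball 0 1 - {0}) x * (ennreal (real DIM('a)) * (ennreal K * INNER x))"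
        proof (cases "x = 0")
          case False
          have xn: "norm (x /\<^sub>R norm x) = 1" using False by simp
          have "ennreal (coef * (\<phi> (r *\<^sub>R (x /\<^sub>R norm x)))^2) \<le> ennreal K * INNER x"
            unfolding coef_def K_def INNER_def F_def
            by (rule ray_bound[OF Dd Dc z k1 s d2 xn r0 rk])
          thus ?thesis by (intro mult_left_mono) auto
        qed simp
      qed
      also have "\<dots> = ennreal K * (ennreal (real DIM('a)) * (\<integral>\<^sup>+x. indicator (ball 0 1 - {0}) x * INNER x \<partial>lborel))"
      proof -
        have Im: "INNER \<in> borel_measurable lborel" unfolding INNER_def
          by (rule lborel.borel_measurable_nn_integral, rule pair_lborel_meas) (use Fm in measurable)
        have "(\<integral>\<^sup>+x. indicator (ball 0 1 - {0}) x * (ennreal (real DIM('a)) * (ennreal K * INNER x)) \<partial>lborel)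
            = (\<integral>\<^sup>+x. (ennreal K * ennreal (real DIM('a))) * (indicator (ball 0 1 - {0}) x * INNER x) \<partial>lborel)"
          by (intro nn_integral_cong) (simp add: mult_ac)
        also have "\<dots> = (ennreal K * ennreal (real DIM('a))) * (\<integral>\<^sup>+x. indicator (ball 0 1 - {0}) x * INNER x \<partial>lborel)"
          by (rule nn_integral_cmult) (use Im in measurable)
        finally show ?thesis by (simp add: mult_ac)
      qed
      also have "\<dots> \<le> ennreal K * (L1^2 + L2^2)"
        by (intro mult_left_mono polar_le) auto
      also have "\<dots> \<le> ennreal K * (L1 + L2)^2"
        by (intro mult_left_mono) (auto simp: power2_sum)
      also have "\<dots> = (ennreal C * (L1 + L2))^2"
        using K0 by (simp add: C_def power_mult_distrib ennreal_power)
      finally show "ennreal c * L2_norm sphere_measure (\<lambda>\<omega>. \<phi> (r *\<^sub>R \<omega>)) \<le> ennreal C * (L1 + L2)"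
        by (rule enn_sq_le)
    qed
  qed
qed


end
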